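(* Let $R$ be a ring such that the set $\operatorname{Nil}(R)$ of nilpotent elements is closed under addition, or is closed under the operation $x\circ y=x+y-xy$. Then $R$ satisfies Köthe's conjecture.
   Context: Rings are associative and not necessarily unital. A ring $R$ satisfies Köthe's conjecture if every nil left ideal of $R$ is contained in a nil two-sided ideal (equivalently, the sum of two nil left ideals of $R$ is a nil left ideal). *)

theory Defs
  imports Main
begin

text \<open>Rings are associative, not necessarily unital: we use the type class ring
  (ab_group_add with associative, distributive multiplication, no unit required).\<close>

text \<open>Positive powers in a possibly non-unital ring: npow x n = x^(n+1).\<close>
fun npow :: "'a::ring \<Rightarrow> nat \<Rightarrow> 'a" where
  "npow x 0 = x"
| "npow x (Suc n) = npow x n * x"

definition nilpotent :: "'a::ring \<Rightarrow> bool" where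
  "nilpotent x \<longleftrightarrow> (\<exists>n. npow x n = 0)"

definition Nil_set :: "'a::ring set" where
  "Nil_set = {x. nilpotent x}"

definition additive_subgroup :: "'a::ring set \<Rightarrow> bool" where
  "additive_subgroup I \<longleftrightarrow> 0 \<in> I \<and> (\<forall>x\<in>I. \<forall>y\<in>I. x + y \<in> I) \<and> (\<forall>x\<in>I. - x \<in> I)"

definition left_ideal :: "'a::ring set \<Rightarrow> bool" where
  "left_ideal I \<longleftrightarrow> additive_subgroup I \<and> (\<forall>r x. x \<in> I \<longrightarrow> r * x \<in> I)"

definition two_sided_ideal :: "'a::ring set \<Rightarrow> bool" where
  "two_sided_ideal I \<longleftrightarrow> additive_subgroup I \<and> (\<forall>r x. x \<in> I \<longrightarrow> r * x \<in> I \<and> x * r \<in> I)"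

definition nil_set :: "'a::ring set \<Rightarrow> bool" where
  "nil_set I \<longleftrightarrow> (\<forall>x\<in>I. nilpotent x)"

definition satisfies_Koethe :: "'a::ring itself \<Rightarrow> bool" where
  "satisfies_Koethe _ \<longleftrightarrow>
     (\<forall>L :: 'a set. left_ideal L \<and> nil_set L \<longrightarrow>
        (\<exists>J. two_sided_ideal J \<and> nil_set J \<and> L \<subseteq> J))"

definition circ_op :: "'a::ring \<Rightarrow> 'a \<Rightarrow> 'a" where
  "circ_op x y = x + y - x * y"

end

theory Submission
  imports Defs
begin

lemma npow_comm: "x * npow x n = npow x (Suc n)"
  by (induction n) (simp_all add: mult.assoc[symmetric])

lemma npow_neg: "npow (-x) n = npow x n \<or> npow (-x) n = - npow x n"
  by (induction n) auto


lemma npow_prod: "npow (x*r) (Suc n) = x * npow (r*x) n * r"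
proof (induction n)
  case 0 then show ?case by (simp add: mult.assoc)
next
  case (Suc n)
  have "npow (x*r) (Suc (Suc n)) = x * npow (r*x) n * r * (x * r)" using Suc by simp
  also have "\<dots> = x * (npow (r*x) n * (r * x)) * r" by (simp add: mult.assoc)
  finally show ?case by simp
qed

lemma nilp_prod: "nilpotent (r*x) \<Longrightarrow> nilpotent (x*r)"
  unfolding nilpotent_def by (metis npow_prod mult_zero_left mult_zero_right)

lemma li_sum: "left_ideal B \<Longrightarrow> (\<forall>i<(n::nat). f i \<in> B) \<Longrightarrow> (\<Sum>i<n. f i) \<in> B"
proof (induction n)
  case 0 then show ?case by (simp add: left_ideal_def additive_subgroup_def)
next
  case (Suc n) then show ?case by (simp add: left_ideal_def additive_subgroup_def)
qed

lemma circ_sum: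
  fixes x y :: "'a::ring"
  assumes "npow x n = 0"
  defines "w \<equiv> y + (\<Sum>i<n. npow x i * y)"
  shows "circ_op x w = x + y"
proof -
  have "x * w = x * y + (\<Sum>i<n. npow x (Suc i) * y)"
    by (simp add: w_def distrib_left sum_distrib_left mult.assoc[symmetric] npow_comm)
  moreover have "(\<Sum>i<n. npow x i * y) - (\<Sum>i<n. npow x (Suc i) * y) = npow x 0 * y - npow x n * y"
    by (induction n) (auto simp: algebra_simps)
  ultimately show ?thesis using assms(1) by (simp add: circ_op_def w_def algebra_simps)
qed

lemma keyK:
  fixes B :: "'a::ring set" and x y :: 'a
  assumes H: "(\<forall>x y :: 'a::ring. x \<in> Nil_set \<and> y \<in> Nil_set \<longrightarrow> x + y \<in> Nil_set)
         \<or> (\<forall>x y :: 'a. x \<in> Nil_set \<and> y \<in> Nil_set \<longrightarrow> circ_op x y \<in> Nil_set)"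
    and B: "left_ideal B" "nil_set B" and x: "nilpotent x" and y: "y \<in> B"
  shows "nilpotent (x + y)"
  using H
proof
  assume "\<forall>x y :: 'a. x \<in> Nil_set \<and> y \<in> Nil_set \<longrightarrow> x + y \<in> Nil_set"
  moreover have "nilpotent y" using y B(2) unfolding nil_set_def by blast
  ultimately show ?thesis using x unfolding Nil_set_def by blast
next
  assume C: "\<forall>x y :: 'a. x \<in> Nil_set \<and> y \<in> Nil_set \<longrightarrow> circ_op x y \<in> Nil_set"
  obtain n where n: "npow x n = 0" using x nilpotent_def by blast
  define w where "w = y + (\<Sum>i<n. npow x i * y)"
  have "(\<Sum>i<n. npow x i * y) \<in> B" using B(1) y by (intro li_sum) (auto simp: left_ideal_def)
  hence "w \<in> B" using B(1) y by (auto simp: w_def left_ideal_def additive_subgroup_def)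
  hence "nilpotent w" using B(2) by (auto simp: nil_set_def)
  hence "circ_op x w \<in> Nil_set" using C x by (auto simp: Nil_set_def)
  then show ?thesis using circ_sum[OF n, of y] w_def by (simp add: Nil_set_def)
qed

definition sumset :: "'a::ring set \<Rightarrow> 'a set \<Rightarrow> 'a set" where
  "sumset A B = {a + b | a b. a \<in> A \<and> b \<in> B}"

lemma sumset_li:
  assumes A: "left_ideal A" and B: "left_ideal B" shows "left_ideal (sumset A B)"
proof -
  have A0: "0 \<in> A" "\<And>x y. x \<in> A \<Longrightarrow> y \<in> A \<Longrightarrow> x + y \<in> A"
    "\<And>x. x \<in> A \<Longrightarrow> - x \<in> A" "\<And>r x. x \<in> A \<Longrightarrow> r * x \<in> A"
    using A by (auto simp: left_ideal_def additive_subgroup_def)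
  have B0: "0 \<in> B" "\<And>x y. x \<in> B \<Longrightarrow> y \<in> B \<Longrightarrow> x + y \<in> B"
    "\<And>x. x \<in> B \<Longrightarrow> - x \<in> B" "\<And>r x. x \<in> B \<Longrightarrow> r * x \<in> B"
    using B by (auto simp: left_ideal_def additive_subgroup_def)
  have "0 \<in> sumset A B" unfolding sumset_def using A0(1) B0(1) by force
  moreover have "u + v \<in> sumset A B" if uv: "u \<in> sumset A B" "v \<in> sumset A B" for u v
  proof -
    obtain a b a' b' where "u = a + b" "v = a' + b'" "a \<in> A" "b \<in> B" "a' \<in> A" "b' \<in> B"
      using uv unfolding sumset_def by blast
    moreover have "a + b + (a' + b') = (a + a') + (b + b')" by (simp add: algebra_simps)
    ultimately show ?thesis unfolding sumset_def using A0(2) B0(2) by fastforce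
  qed
  moreover have "- u \<in> sumset A B" if u1: "u \<in> sumset A B" for u
  proof -
    obtain a b where "u = a + b" "a \<in> A" "b \<in> B" using u1 unfolding sumset_def by blast
    moreover have "- (a + b) = (-a) + (-b)" by simp
    ultimately show ?thesis unfolding sumset_def using A0(3) B0(3) by fastforce
  qed
  moreover have "r * u \<in> sumset A B" if u1: "u \<in> sumset A B" for u r
  proof -
    obtain a b where "u = a + b" "a \<in> A" "b \<in> B" using u1 unfolding sumset_def by blast
    moreover have "r * (a + b) = r * a + r * b" by (simp add: distrib_left)
    ultimately show ?thesis unfolding sumset_def using A0(4) B0(4) by fastforce
  qed
  ultimately show ?thesis unfolding left_ideal_def additive_subgroup_def by blast
qed

lemma sumset_nil:
  fixes A B :: "'a::ring set"
  assumes H: "(\<forall>x y :: 'a::ring. x \<in> Nil_set \<and> y \<in> Nil_set \<longrightarrow> x + y \<in> Nil_set)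
         \<or> (\<forall>x y :: 'a. x \<in> Nil_set \<and> y \<in> Nil_set \<longrightarrow> circ_op x y \<in> Nil_set)"
    and "left_ideal A" "nil_set A" "left_ideal B" "nil_set B"
  shows "nil_set (sumset A B)"
  using assms keyK[OF H] unfolding nil_set_def sumset_def by blast

definition rset :: "'a::ring set \<Rightarrow> 'a \<Rightarrow> 'a set" where
  "rset L r = {x * r | x. x \<in> L}"

lemma rset_li:
  assumes A: "left_ideal L" shows "left_ideal (rset L r)"
proof -
  have A0: "0 \<in> L" "\<And>x y. x \<in> L \<Longrightarrow> y \<in> L \<Longrightarrow> x + y \<in> L"
    "\<And>x. x \<in> L \<Longrightarrow> - x \<in> L" "\<And>r x. x \<in> L \<Longrightarrow> r * x \<in> L"
    using A by (auto simp: left_ideal_def additive_subgroup_def)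
  have "(0::'a) = 0 * r" by simp
  hence "0 \<in> rset L r" unfolding rset_def using A0(1) by blast
  moreover have "u + v \<in> rset L r" if uv: "u \<in> rset L r" "v \<in> rset L r" for u v
  proof -
    obtain a a' where "u = a * r" "v = a' * r" "a \<in> L" "a' \<in> L"
      using uv unfolding rset_def by blast
    moreover have "a * r + a' * r = (a + a') * r" by (simp add: distrib_right)
    ultimately show ?thesis unfolding rset_def using A0(2) by fastforce
  qed
  moreover have "- u \<in> rset L r" if u1: "u \<in> rset L r" for u
  proof -
    obtain a where "u = a * r" "a \<in> L" using u1 unfolding rset_def by blast
    moreover have "- (a * r) = (-a) * r" by simp
    ultimately show ?thesis unfolding rset_def using A0(3) by fastforce
  qed
  moreover have "s * u \<in> rset L r" if u1: "u \<in> rset L r" for u s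
  proof -
    obtain a where "u = a * r" "a \<in> L" using u1 unfolding rset_def by blast
    moreover have "s * (a * r) = (s * a) * r" by (simp add: mult.assoc)
    ultimately show ?thesis unfolding rset_def using A0(4) by fastforce
  qed
  ultimately show ?thesis unfolding left_ideal_def additive_subgroup_def by blast
qed

lemma rset_nil: "left_ideal L \<Longrightarrow> nil_set L \<Longrightarrow> nil_set (rset L r)"
  unfolding nil_set_def rset_def left_ideal_def using nilp_prod by blast

inductive_set gen :: "'a::ring set \<Rightarrow> 'a set" for L where
  base: "x \<in> L \<Longrightarrow> x \<in> gen L"
| rmul: "x \<in> L \<Longrightarrow> x * r \<in> gen L"
| add: "a \<in> gen L \<Longrightarrow> b \<in> gen L \<Longrightarrow> a + b \<in> gen L"
| neg: "a \<in> gen L \<Longrightarrow> - a \<in> gen L"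

lemma gen_left: assumes LI: "left_ideal L" and j: "j \<in> gen L" shows "r * j \<in> gen L"
  using j proof (induction j rule: gen.induct)
  case (base x) then show ?case using LI by (auto simp: left_ideal_def intro: gen.base)
next
  case (rmul x s)
  have "r * x \<in> L" using rmul LI by (auto simp: left_ideal_def)
  then show ?case by (metis gen.rmul mult.assoc)
next
  case (add a b) then show ?case by (simp add: distrib_left gen.add)
next
  case (neg a) then show ?case by (simp add: gen.neg)
qed

lemma gen_right: "j \<in> gen L \<Longrightarrow> j * r \<in> gen L"
proof (induction j rule: gen.induct)
  case (base x) then show ?case by (rule gen.rmul)
next
  case (rmul x s) then show ?case by (metis gen.rmul mult.assoc)
next
  case (add a b) then show ?case by (simp add: distrib_right gen.add)
next
  case (neg a) then show ?case by (simp add: gen.neg)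
qed

theorem lemma2p3:
  assumes "(\<forall>x y :: 'a::ring. x \<in> Nil_set \<and> y \<in> Nil_set \<longrightarrow> x + y \<in> Nil_set)
         \<or> (\<forall>x y :: 'a. x \<in> Nil_set \<and> y \<in> Nil_set \<longrightarrow> circ_op x y \<in> Nil_set)"
  shows "satisfies_Koethe TYPE('a)"
  unfolding satisfies_Koethe_def
proof (intro allI impI)
  fix L :: "'a set"
  assume LL: "left_ideal L \<and> nil_set L"
  have inA: "\<exists>A. left_ideal A \<and> nil_set A \<and> j \<in> A" if "j \<in> gen L" for j
    using that
  proof (induction j rule: gen.induct)
    case (base x) then show ?case using LL by blast
  next
    case (rmul x r)
    then show ?case using LL rset_li rset_nil unfolding rset_def by blast
  next
    case (add a b)
    then obtain A B where "left_ideal A" "nil_set A" "a \<in> A" "left_ideal B" "nil_set B" "b \<in> B"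
      by blast
    then show ?case using sumset_li sumset_nil[OF assms] unfolding sumset_def by blast
  next
    case (neg a)
    then show ?case by (auto simp: left_ideal_def additive_subgroup_def)
  qed
  have "0 \<in> L" using LL by (simp add: left_ideal_def additive_subgroup_def)
  hence "two_sided_ideal (gen L)"
    unfolding two_sided_ideal_def additive_subgroup_def
    using LL gen_left gen_right gen.add gen.neg gen.base by blast
  moreover have "nil_set (gen L)" using inA unfolding nil_set_def by blast
  moreover have "L \<subseteq> gen L" using gen.base by blast
  ultimately show "\<exists>J. two_sided_ideal J \<and> nil_set J \<and> L \<subseteq> J" by blast
qed

end
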